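(* Let $f$ be a transcendental entire function with a finite logarithmic asymptotic value $\alpha\in\mathbb{C}$. Let $r>0$ be sufficiently small that $f$ is a universal covering from a component $T$ of $f^{-1}(B(\alpha,r))$ onto $B(\alpha,r)\setminus\{\alpha\}$. Then there exist $R>0$ and a component $V$ of $T\cap B(0,R)$ such that the following holds: whenever $\gamma\subset\mathbb{C}\setminus\overline{B(0,R)}$ is a continuum such that $V$ lies in a bounded component of $T\setminus\gamma$, the component of $\mathbb{C}\setminus f(\gamma\cap T)$ containing $\alpha$ lies in $B(\alpha,r)$.
   Context: $B(a,r)=\{z\in\mathbb{C}:|z-a|<r\}$. A value $\alpha\in\mathbb{C}$ is a finite logarithmic asymptotic value of $f$ if there exist $r>0$ and a component $U$ of $f^{-1}(B(\alpha,r))$ such that $f:U\to B(\alpha,r)\setminus\{\alpha\}$ is a universal covering. *)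

theory Defs
  imports "HOL-Complex_Analysis.Complex_Analysis"
begin

definition transcendental_entire :: "(complex \<Rightarrow> complex) \<Rightarrow> bool" where
  "transcendental_entire f \<longleftrightarrow> f holomorphic_on UNIV \<and> \<not> (\<exists>p. \<forall>z. f z = poly p z)"

definition continuum :: "complex set \<Rightarrow> bool" where
  "continuum K \<longleftrightarrow> K \<noteq> {} \<and> compact K \<and> connected K"

definition universal_covering :: "complex set \<Rightarrow> (complex \<Rightarrow> complex) \<Rightarrow> complex set \<Rightarrow> bool" where
  "universal_covering U f S \<longleftrightarrow> covering_space U f S \<and> simply_connected U"

end

theory Submission
  imports Defs
begin

theorem lemma2p4:
  fixes f :: "complex \<Rightarrow> complex" and \<alpha> :: complex and r :: real and T :: "complex set"
  assumes "transcendental_entire f"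
    and "r > 0"
    and "T \<in> components (f -` ball \<alpha> r)"
    and "universal_covering T f (ball \<alpha> r - {\<alpha>})"
  shows "\<exists>R>0. \<exists>V. V \<in> components (T \<inter> ball 0 R) \<and>
           (\<forall>\<gamma>. continuum \<gamma> \<and> \<gamma> \<subseteq> - cball 0 R \<and>
                 (\<exists>W \<in> components (T - \<gamma>). bounded W \<and> V \<subseteq> W)
               \<longrightarrow> connected_component_set (- f ` (\<gamma> \<inter> T)) \<alpha> \<subseteq> ball \<alpha> r)"
proof -
  have holf: "f holomorphic_on UNIV" and npoly: "\<not> (\<exists>p. \<forall>z. f z = poly p z)"
    using assms(1) unfolding transcendental_entire_def by auto
  have contf: "continuous_on UNIV f"
    using holf holomorphic_on_imp_continuous_on by blast
  have nconst: "\<not> f constant_on UNIV"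
  proof
    assume "f constant_on UNIV"
    then obtain c where "\<And>z. f z = c" unfolding constant_on_def by blast
    then have "\<forall>z. f z = poly [:c:] z" by simp
    then show False using npoly by blast
  qed
  have openfW: "open (f ` W)" if "open W" for W
    using open_mapping_thm[OF holf open_UNIV connected_UNIV that _ nconst] by simp
  have cov: "covering_space T f (ball \<alpha> r - {\<alpha>})"
    using assms(4) unfolding universal_covering_def by blast
  have fT: "f ` T = ball \<alpha> r - {\<alpha>}"
    using covering_space_imp_surjective[OF cov] .
  define U where "U = f -` ball \<alpha> r"
  have openU: "open U" unfolding U_def
    using contf by (simp add: open_vimage)
  have TU: "T \<subseteq> U" using assms(3) in_components_subset U_def by blast
  have openT: "open T" using open_components[OF openU] assms(3) U_def by blast
  have L1: "z \<in> T" if z: "z \<in> closure T" "f z \<in> ball \<alpha> r" for z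
  proof -
    have zU: "z \<in> U" using z U_def by simp
    define C where "C = connected_component_set U z"
    have "open C" unfolding C_def using openU open_connected_component by blast
    moreover have "z \<in> C" unfolding C_def using zU by simp
    ultimately have "C \<inter> T \<noteq> {}" using z(1)
      using open_Int_closure_eq_empty[of C T] by blast
    then have "C \<subseteq> T"
      using components_maximal[of T U C] assms(3) U_def C_def
        connected_connected_component connected_component_subset by blast
    then show ?thesis using \<open>z \<in> C\<close> by blast
  qed
  define \<rho> where "\<rho> = r / 2"
  have \<rho>: "0 < \<rho>" "\<rho> < r" using assms(2) \<rho>_def by auto
  have pimg: "path_image (circlepath \<alpha> \<rho>) \<subseteq> ball \<alpha> r - {\<alpha>}"
    using \<rho> by (auto simp: dist_commute)
  obtain h where h: "path h" "path_image h \<subseteq> T" "\<And>t. t \<in> {0..1} \<Longrightarrow> f (h t) = circlepath \<alpha> \<rho> t"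
    using covering_space_lift_path[OF cov path_circlepath pimg] by blast
  define \<sigma> where "\<sigma> = path_image h"
  have fsig: "f ` \<sigma> = sphere \<alpha> \<rho>"
  proof -
    have "f ` \<sigma> = path_image (circlepath \<alpha> \<rho>)"
      unfolding \<sigma>_def path_image_def image_comp using h(3)
      by (intro image_cong) auto
    then show ?thesis using \<rho> by simp
  qed
  have "bounded \<sigma>" unfolding \<sigma>_def using h(1) compact_path_image compact_imp_bounded by blast
  then obtain R where R: "R > 0" "\<sigma> \<subseteq> ball 0 R"
    by (meson bounded_subset_ballD)
  define V where "V = connected_component_set (T \<inter> ball 0 R) (h 0)"
  have h0: "h 0 \<in> \<sigma>" unfolding \<sigma>_def path_image_def by auto
  have sigTB: "\<sigma> \<subseteq> T \<inter> ball 0 R" using R h(2) \<sigma>_def by auto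
  have Vcomp: "V \<in> components (T \<inter> ball 0 R)"
    unfolding V_def components_iff using h0 sigTB by blast
  have sigV: "\<sigma> \<subseteq> V" unfolding V_def
    using connected_component_maximal[OF h0 _ sigTB] h(1) \<sigma>_def by blast
  show ?thesis
  proof (intro exI conjI allI impI)
    show "R > 0" by fact
    show "V \<in> components (T \<inter> ball 0 R)" by fact
    fix \<gamma>
    assume asm: "continuum \<gamma> \<and> \<gamma> \<subseteq> - cball 0 R \<and>
                 (\<exists>W \<in> components (T - \<gamma>). bounded W \<and> V \<subseteq> W)"
    then obtain W where W: "W \<in> components (T - \<gamma>)" "bounded W" "V \<subseteq> W" by blast
    have "compact \<gamma>" using asm unfolding continuum_def by blast
    then have "closed \<gamma>" by (simp add: compact_imp_closed)
    have openTg: "open (T - \<gamma>)" using openT \<open>closed \<gamma>\<close> by blast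
    have openW: "open W" using open_components[OF openTg W(1)] .
    have WTg: "W \<subseteq> T - \<gamma>" using W(1) in_components_subset by blast
    have openfW': "open (f ` W)" using openfW openW .
    have sphW: "sphere \<alpha> \<rho> \<subseteq> f ` W" using fsig sigV W(3) by blast
    have cW: "compact (closure W)" using W(2) compact_closure by blast
    have clfW: "closure (f ` W) \<subseteq> f ` closure W"
    proof -
      have "compact (f ` closure W)"
        using compact_continuous_image[OF continuous_on_subset[OF contf] cW] by simp
      then show ?thesis
        by (meson closure_minimal closure_subset compact_imp_closed image_mono)
    qed
    have closedinW: "closedin (top_of_set (T - \<gamma>)) W"
    proof -
      obtain x where "W = connected_component_set (T - \<gamma>) x" using W(1) components_iff by blast
      then show ?thesis using closedin_connected_component by simp
    qed
    have L4: "\<zeta> \<in> f ` (\<gamma> \<inter> T)" if zz: "\<zeta> \<in> closure (f ` W)" "\<zeta> \<notin> f ` W" "\<zeta> \<in> ball \<alpha> r" for \<zeta>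
    proof -
      obtain z where z: "z \<in> closure W" "\<zeta> = f z" using clfW zz(1) by blast
      have "closure W \<subseteq> closure T" using WTg closure_mono by blast
      then have zT: "z \<in> T" using L1 z zz(3) by blast
      show ?thesis
      proof (cases "z \<in> \<gamma>")
        case True then show ?thesis using zT z by blast
      next
        case False
        obtain X where X: "closed X" "W = (T - \<gamma>) \<inter> X"
          using closedinW unfolding closedin_closed by auto
        have "W \<subseteq> X" using X by blast
        then have "closure W \<subseteq> X" using X(1) closure_minimal by blast
        then have "z \<in> W" using X z zT False by blast
        then show ?thesis using zz(2) z by blast
      qed
    qed
    show "connected_component_set (- f ` (\<gamma> \<inter> T)) \<alpha> \<subseteq> ball \<alpha> r"
    proof (rule ccontr)
      assume "\<not> ?thesis"
      then obtain \<zeta>0 where \<zeta>0: "\<zeta>0 \<in> connected_component_set (- f ` (\<gamma> \<inter> T)) \<alpha>" "\<zeta>0 \<notin> ball \<alpha> r"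
        by blast
      define K where "K = connected_component_set (- f ` (\<gamma> \<inter> T)) \<alpha>"
      have "\<alpha> \<in> - f ` (\<gamma> \<inter> T)" using \<zeta>0(1) connected_component_in[of "- f ` (\<gamma> \<inter> T)" \<alpha> \<zeta>0] by simp
      then have "\<alpha> \<in> K" unfolding K_def by simp
      have Ksub: "K \<subseteq> - f ` (\<gamma> \<inter> T)" unfolding K_def by (rule connected_component_subset)
      define S where "S = ball \<alpha> \<rho> - f ` W"
      have "f ` W \<subseteq> ball \<alpha> r - {\<alpha>}" using fT WTg by blast
      then have "\<alpha> \<in> S" using \<rho> S_def by auto
      moreover have "\<zeta>0 \<notin> S" using \<zeta>0(2) \<rho> S_def by auto
      ultimately have "K \<inter> frontier S \<noteq> {}"
      proof -
        assume a1: "\<alpha> \<in> S" and a2: "\<zeta>0 \<notin> S"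
        have "connected K" unfolding K_def by (rule connected_connected_component)
        moreover have "K \<inter> S \<noteq> {}" using a1 \<open>\<alpha> \<in> K\<close> by blast
        moreover have "K - S \<noteq> {}" using a2 \<zeta>0(1) K_def by blast
        ultimately show ?thesis by (rule connected_Int_frontier)
      qed
      then obtain \<zeta> where \<zeta>: "\<zeta> \<in> K" "\<zeta> \<in> frontier S" by blast
      have "\<zeta> \<notin> f ` W"
      proof
        assume "\<zeta> \<in> f ` W"
        then have "\<zeta> \<notin> closure S"
          using openfW' open_Int_closure_eq_empty[of "f ` W" S] S_def by blast
        then show False using \<zeta> frontier_def by auto
      qed
      have "\<zeta> \<in> closure S" using \<zeta> frontier_def by auto
      also have "closure S \<subseteq> cball \<alpha> \<rho>" unfolding S_def
        using closure_mono[of "ball \<alpha> \<rho> - f ` W" "ball \<alpha> \<rho>"] closure_ball[OF \<rho>(1)] by blast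
      finally have "\<zeta> \<in> cball \<alpha> \<rho>" .
      then have "\<zeta> \<in> ball \<alpha> \<rho>" using \<open>\<zeta> \<notin> f ` W\<close> sphW by (auto simp: less_le)
      have "\<zeta> \<notin> interior S" using \<zeta> frontier_def by auto
      then have "\<zeta> \<in> closure (- S)" by (simp add: interior_closure)
      moreover have "- S = - ball \<alpha> \<rho> \<union> f ` W" unfolding S_def by blast
      ultimately have "\<zeta> \<in> closure (- ball \<alpha> \<rho>) \<union> closure (f ` W)" by simp
      moreover have "closure (- ball \<alpha> \<rho>) = - ball \<alpha> \<rho>" by (simp add: closed_Compl)
      ultimately have "\<zeta> \<in> closure (f ` W)" using \<open>\<zeta> \<in> ball \<alpha> \<rho>\<close> by blast
      then have "\<zeta> \<in> f ` (\<gamma> \<inter> T)" by (rule L4) (use \<open>\<zeta> \<notin> f ` W\<close> \<open>\<zeta> \<in> ball \<alpha> \<rho>\<close> \<rho> in auto)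
      then show False using \<zeta>(1) Ksub by blast
    qed
  qed
qed

end
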